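(* There is an absolute constant $C$ such that for all positive integers $n$ and every height profile $(m,M)$ (of some sum-free subset of $\Lambda(R\cup L)$ meeting every fiber) with discrepancy $D$, $$\sum_{i=-2w}^{2w-2}|\Delta^2 m(i)|\le C(D+n),$$ where $(\Delta f)(i)=f(i+1)-f(i)$.
   Context: Sum-free: no $a,b,c$ (not necessarily distinct) with $a+b=c$, coordinatewise addition in $\mathbb{Z}^2$. $\Lambda(X)=\mathbb{Z}^2\cap X$. $R=\{(x,y):0.7n\le x+y\le n,\ |x-y|\le0.8n\}$, $L=\{(x,y):2\lceil0.7n\rceil\le x+y\le1.7n,\ |x-y|\le0.4n\}$, $w=\lfloor0.4n\rfloor$. Fibers $R_i=\{(x,y)\in\Lambda(R):x-y=i\}$ ($|i|\le2w$), $L_k=\{(x,y)\in\Lambda(L):x-y=k\}$ ($|k|\le w$). Height $h(x,y)=\lfloor(x+y-\lceil0.7n\rceil)/2\rfloor$ on $R$ and $\lfloor(x+y-2\lceil0.7n\rceil)/2\rfloor$ on $L$. For sum-free $S\subseteq\Lambda(R\cup L)$ meeting every fiber, its height profile is $(m,M)$ with $m(i)=\min h(S\cap R_i)$, $M(k)=\max h(S\cap L_k)$. Let $\mathcal{T}=\{(-t,2t,t):t\in[w]\}\cup\{(-w-t,2t-1,-w-1+t):t\in[w]\}$. For $s\in\{-1,0,1\}$ and $(i,j,k)\in\mathcal{T}$ set $d_s(i)=M(k+s)-m(j+s)-m(i)$ (taken to be $0$ when some index is outside the domain of $m$ or $M$), $D_s=\sum_{(i,j,k)\in\mathcal{T}}|d_s(i)|$,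 and the discrepancy is $D=\max\{D_{-1},D_0,D_1\}$. *)

theory Defs
  imports Main "HOL.Real"
begin

definition c7 :: "nat \<Rightarrow> int" where
  "c7 n = \<lceil>(7/10) * real n\<rceil>"

definition wd :: "nat \<Rightarrow> int" where
  "wd n = \<lfloor>(4/10) * real n\<rfloor>"

definition Rset :: "nat \<Rightarrow> (int \<times> int) set" where
  "Rset n = {(x, y). (7/10) * real n \<le> real_of_int (x + y) \<and> real_of_int (x + y) \<le> real n
                     \<and> \<bar>real_of_int (x - y)\<bar> \<le> (8/10) * real n}"

definition Lset :: "nat \<Rightarrow> (int \<times> int) set" where
  "Lset n = {(x, y). 2 * c7 n \<le> x + y \<and> real_of_int (x + y) \<le> (17/10) * real n
                     \<and> \<bar>real_of_int (x - y)\<bar> \<le> (4/10) * real n}"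

definition Rfib :: "nat \<Rightarrow> int \<Rightarrow> (int \<times> int) set" where
  "Rfib n i = {p \<in> Rset n. fst p - snd p = i}"

definition Lfib :: "nat \<Rightarrow> int \<Rightarrow> (int \<times> int) set" where
  "Lfib n k = {p \<in> Lset n. fst p - snd p = k}"

definition hR :: "nat \<Rightarrow> int \<times> int \<Rightarrow> int" where
  "hR n p = \<lfloor>real_of_int (fst p + snd p - c7 n) / 2\<rfloor>"

definition hL :: "nat \<Rightarrow> int \<times> int \<Rightarrow> int" where
  "hL n p = \<lfloor>real_of_int (fst p + snd p - 2 * c7 n) / 2\<rfloor>"

definition sum_free :: "(int \<times> int) set \<Rightarrow> bool" where
  "sum_free S \<longleftrightarrow> (\<forall>a\<in>S. \<forall>b\<in>S. \<forall>c\<in>S. (fst a + fst b, snd a + snd b) \<noteq> c)"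

definition meets_all_fibers :: "nat \<Rightarrow> (int \<times> int) set \<Rightarrow> bool" where
  "meets_all_fibers n S \<longleftrightarrow>
     (\<forall>i. \<bar>i\<bar> \<le> 2 * wd n \<longrightarrow> S \<inter> Rfib n i \<noteq> {}) \<and>
     (\<forall>k. \<bar>k\<bar> \<le> wd n \<longrightarrow> S \<inter> Lfib n k \<noteq> {})"

definition prof_m :: "nat \<Rightarrow> (int \<times> int) set \<Rightarrow> int \<Rightarrow> int" where
  "prof_m n S i = Min (hR n ` (S \<inter> Rfib n i))"

definition prof_M :: "nat \<Rightarrow> (int \<times> int) set \<Rightarrow> int \<Rightarrow> int" where
  "prof_M n S k = Max (hL n ` (S \<inter> Lfib n k))"

definition Tset :: "nat \<Rightarrow> (int \<times> int \<times> int) set" where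
  "Tset n = {(-t, 2 * t, t) | t. 1 \<le> t \<and> t \<le> wd n}
          \<union> {(- wd n - t, 2 * t - 1, - wd n - 1 + t) | t. 1 \<le> t \<and> t \<le> wd n}"

text \<open>d_s for a triple; 0 when some index is outside the domain of m ([-2w,2w]) or M ([-w,w]).\<close>
definition dval :: "nat \<Rightarrow> (int \<times> int) set \<Rightarrow> int \<Rightarrow> int \<times> int \<times> int \<Rightarrow> int" where
  "dval n S s t = (case t of (i, j, k) \<Rightarrow>
     (if \<bar>i\<bar> \<le> 2 * wd n \<and> \<bar>j + s\<bar> \<le> 2 * wd n \<and> \<bar>k + s\<bar> \<le> wd n
      then prof_M n S (k + s) - prof_m n S (j + s) - prof_m n S i else 0))"

definition Dsum :: "nat \<Rightarrow> (int \<times> int) set \<Rightarrow> int \<Rightarrow> int" where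
  "Dsum n S s = (\<Sum>t\<in>Tset n. \<bar>dval n S s t\<bar>)"

definition discrepancy :: "nat \<Rightarrow> (int \<times> int) set \<Rightarrow> int" where
  "discrepancy n S = max (Dsum n S (-1)) (max (Dsum n S 0) (Dsum n S 1))"

end

theory Submission
  imports Defs
begin

lemma sum_shift_int:
  fixes f :: "int \<Rightarrow> 'a::comm_monoid_add"
  shows "(\<Sum>t\<in>{a..b}. f (t + k)) = (\<Sum>t\<in>{a+k..b+k}. f t)"
proof -
  have "{a+k..b+k} = (\<lambda>t. t+k) ` {a..b}" by simp
  moreover have "inj_on (\<lambda>t. t+k) {a..b}" by (auto simp: inj_on_def)
  ultimately show ?thesis using sum.reindex[of "\<lambda>t. t+k" "{a..b}" f] by (simp add: o_def)
qed

lemma sum_Un_le_nonneg: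
  fixes f :: "'b \<Rightarrow> int"
  assumes "finite A" "finite B" "\<And>x. f x \<ge> 0"
  shows "sum f (A \<union> B) \<le> sum f A + sum f B"
proof -
  have "sum f (A \<inter> B) \<ge> 0" using assms(3) by (simp add: sum_nonneg)
  then show ?thesis using sum_Un[OF assms(1,2), of f] by linarith
qed

lemma sum_img_inj:
  fixes g :: "int \<Rightarrow> int"
  assumes "inj g"
  shows "sum f (g ` A) = sum (\<lambda>t. f (g t)) A"
  using assms by (simp add: sum.reindex inj_on_def inj_def)

lemma abs6: "\<bar>-(a+b)+c-d-e+f\<bar> \<le> \<bar>a\<bar>+\<bar>b\<bar>+(\<bar>c\<bar>+\<bar>d\<bar>+\<bar>e\<bar>+\<bar>f::int\<bar>)"
  by arith

lemma core:
  fixes m M :: "int \<Rightarrow> int" and w B D :: int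
  assumes w0: "0 \<le> w"
  assumes bnd: "\<And>i. \<bar>i\<bar> \<le> 2*w \<Longrightarrow> 0 \<le> m i \<and> m i \<le> B"
  assumes hF: "\<And>s A. A \<subseteq> {1..w} \<Longrightarrow> (\<And>u. u \<in> A \<Longrightarrow> \<bar>2*u+s\<bar> \<le> 2*w \<and> \<bar>u+s\<bar> \<le> w) \<Longrightarrow>
      s \<in> {-1,0,1} \<Longrightarrow> (\<Sum>u\<in>A. \<bar>M (u+s) - m (2*u+s) - m (-u)\<bar>) \<le> D"
  assumes hG: "\<And>s A. A \<subseteq> {1..w} \<Longrightarrow> (\<And>u. u \<in> A \<Longrightarrow> \<bar>2*u-1+s\<bar> \<le> 2*w \<and> \<bar>-w-1+u+s\<bar> \<le> w) \<Longrightarrow>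
      s \<in> {-1,0,1} \<Longrightarrow> (\<Sum>u\<in>A. \<bar>M (-w-1+u+s) - m (2*u-1+s) - m (-w-u)\<bar>) \<le> D"
  shows "(\<Sum>c\<in>{-2*w+1..2*w-1}. \<bar>m (c+1) - 2 * m c + m (c-1)\<bar>) \<le> 32 * D + 10 * B"
proof -
  define F where "F s t = M (t+s) - m (2*t+s) - m (-t)" for s t
  define G where "G s t = M (-w-1+t+s) - m (2*t-1+s) - m (-w-t)" for s t
  define d2 where "d2 c = m (c+1) - 2 * m c + m (c-1)" for c
  have E1: "d2 (2*t) = G 1 t - G 0 (t+1) + G (-1) (t+1) - G 0 t" for t
    unfolding d2_def G_def by (simp add: algebra_simps)
  have E2: "d2 (2*t+1) = (F 1 t - F 0 t) - (F 0 (t+1) - F (-1) (t+1))" for t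
    unfolding d2_def F_def by (simp add: algebra_simps)
  have E3: "d2 (-(t+1)) = -(d2 (2*t+1) + d2 (2*t+2)) + F (-1) (t+1) - F 0 t - F (-1) (t+2) + F 0 (t+1)" for t
    unfolding d2_def F_def by (simp add: algebra_simps)
  have E4: "d2 (-w-t-1) = -(d2 (2*t+1) + d2 (2*t+2)) + G 1 (t+1) - G 0 (t+2) - G 1 t + G 0 (t+1)" for t
    unfolding d2_def G_def by (simp add: algebra_simps) (rule arg_cong[where f=m], simp)

  have FB: "(\<Sum>t\<in>{a..b}. \<bar>F s (t+k)\<bar>) \<le> D"
    if "s \<in> {-1,0,1}" "1 \<le> a+k" "b+k \<le> w"
       "\<And>u. a+k \<le> u \<Longrightarrow> u \<le> b+k \<Longrightarrow> \<bar>2*u+s\<bar> \<le> 2*w \<and> \<bar>u+s\<bar> \<le> w" for s a b k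
  proof -
    have "(\<Sum>t\<in>{a..b}. \<bar>F s (t+k)\<bar>) = (\<Sum>u\<in>{a+k..b+k}. \<bar>F s u\<bar>)"
      by (rule sum_shift_int)
    also have "\<dots> \<le> D" unfolding F_def
      by (rule hF) (use that in auto)
    finally show ?thesis .
  qed
  have GB: "(\<Sum>t\<in>{a..b}. \<bar>G s (t+k)\<bar>) \<le> D"
    if "s \<in> {-1,0,1}" "1 \<le> a+k" "b+k \<le> w"
       "\<And>u. a+k \<le> u \<Longrightarrow> u \<le> b+k \<Longrightarrow> \<bar>2*u-1+s\<bar> \<le> 2*w \<and> \<bar>-w-1+u+s\<bar> \<le> w" for s a b k
  proof -
    have "(\<Sum>t\<in>{a..b}. \<bar>G s (t+k)\<bar>) = (\<Sum>u\<in>{a+k..b+k}. \<bar>G s u\<bar>)"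
      by (rule sum_shift_int)
    also have "\<dots> \<le> D" unfolding G_def
      by (rule hG) (use that in auto)
    finally show ?thesis .
  qed
  define PE where "PE = (\<Sum>t\<in>{1..w-1}. \<bar>d2 (2*t)\<bar>)"
  define PO where "PO = (\<Sum>t\<in>{1..w-1}. \<bar>d2 (2*t+1)\<bar>)"
  have PE: "PE \<le> 4 * D"
  proof -
    have "PE \<le> (\<Sum>t\<in>{1..w-1}. \<bar>G 1 (t+0)\<bar> + \<bar>G 0 (t+1)\<bar> + \<bar>G (-1) (t+1)\<bar> + \<bar>G 0 (t+0)\<bar>)"
      unfolding PE_def by (rule sum_mono) (simp add: E1)
    also have "\<dots> = (\<Sum>t\<in>{1..w-1}. \<bar>G 1 (t+0)\<bar>) + (\<Sum>t\<in>{1..w-1}. \<bar>G 0 (t+1)\<bar>)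
        + (\<Sum>t\<in>{1..w-1}. \<bar>G (-1) (t+1)\<bar>) + (\<Sum>t\<in>{1..w-1}. \<bar>G 0 (t+0)\<bar>)"
      by (simp add: sum.distrib)
    also have "\<dots> \<le> D + D + D + D"
      by (intro add_mono GB) auto
    finally show ?thesis by simp
  qed
  have PO: "PO \<le> 4 * D"
  proof -
    have "PO \<le> (\<Sum>t\<in>{1..w-1}. \<bar>F 1 (t+0)\<bar> + \<bar>F 0 (t+0)\<bar> + \<bar>F 0 (t+1)\<bar> + \<bar>F (-1) (t+1)\<bar>)"
      unfolding PO_def by (rule sum_mono) (simp add: E2)
    also have "\<dots> = (\<Sum>t\<in>{1..w-1}. \<bar>F 1 (t+0)\<bar>) + (\<Sum>t\<in>{1..w-1}. \<bar>F 0 (t+0)\<bar>)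
        + (\<Sum>t\<in>{1..w-1}. \<bar>F 0 (t+1)\<bar>) + (\<Sum>t\<in>{1..w-1}. \<bar>F (-1) (t+1)\<bar>)"
      by (simp add: sum.distrib)
    also have "\<dots> \<le> D + D + D + D"
      by (intro add_mono FB) auto
    finally show ?thesis by simp
  qed
  have PO2: "(\<Sum>t\<in>{1..w-2}. \<bar>d2 (2*t+1)\<bar>) \<le> PO"
    unfolding PO_def by (rule sum_mono2) auto
  have PE2: "(\<Sum>t\<in>{1..w-2}. \<bar>d2 (2*t+2)\<bar>) \<le> PE"
  proof -
    have "(\<Sum>t\<in>{1..w-2}. \<bar>d2 (2*t+2)\<bar>) = (\<Sum>t\<in>{1..w-2}. (\<lambda>u. \<bar>d2 (2*u)\<bar>) (t+1))"
      by (simp add: algebra_simps)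
    also have "\<dots> = (\<Sum>u\<in>{1+1..w-2+1}. \<bar>d2 (2*u)\<bar>)" by (rule sum_shift_int)
    also have "\<dots> \<le> PE" unfolding PE_def by (rule sum_mono2) auto
    finally show ?thesis .
  qed
  define PN where "PN = (\<Sum>t\<in>{1..w-2}. \<bar>d2 (-(t+1))\<bar>)"
  define PF where "PF = (\<Sum>t\<in>{1..w-2}. \<bar>d2 (-w-t-1)\<bar>)"
  have PN: "PN \<le> PO + PE + 4 * D"
  proof -
    have "PN \<le> (\<Sum>t\<in>{1..w-2}. (\<bar>d2 (2*t+1)\<bar> + \<bar>d2 (2*t+2)\<bar>) + (\<bar>F (-1) (t+1)\<bar> + \<bar>F 0 (t+0)\<bar> + \<bar>F (-1) (t+2)\<bar> + \<bar>F 0 (t+1)\<bar>))"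
      unfolding PN_def by (rule sum_mono) (simp only: E3 add_0_right abs6)
    also have "\<dots> = (\<Sum>t\<in>{1..w-2}. \<bar>d2 (2*t+1)\<bar>) + (\<Sum>t\<in>{1..w-2}. \<bar>d2 (2*t+2)\<bar>) +
        ((\<Sum>t\<in>{1..w-2}. \<bar>F (-1) (t+1)\<bar>) + (\<Sum>t\<in>{1..w-2}. \<bar>F 0 (t+0)\<bar>)
        + (\<Sum>t\<in>{1..w-2}. \<bar>F (-1) (t+2)\<bar>) + (\<Sum>t\<in>{1..w-2}. \<bar>F 0 (t+1)\<bar>))"
      by (simp add: sum.distrib)
    also have "\<dots> \<le> PO + PE + (D + D + D + D)"
      by (intro add_mono FB PO2 PE2) auto
    finally show ?thesis by simp
  qed
  have PF: "PF \<le> PO + PE + 4 * D"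
  proof -
    have "PF \<le> (\<Sum>t\<in>{1..w-2}. (\<bar>d2 (2*t+1)\<bar> + \<bar>d2 (2*t+2)\<bar>) + (\<bar>G 1 (t+1)\<bar> + \<bar>G 0 (t+2)\<bar> + \<bar>G 1 (t+0)\<bar> + \<bar>G 0 (t+1)\<bar>))"
      unfolding PF_def by (rule sum_mono) (simp only: E4 add_0_right abs6)
    also have "\<dots> = (\<Sum>t\<in>{1..w-2}. \<bar>d2 (2*t+1)\<bar>) + (\<Sum>t\<in>{1..w-2}. \<bar>d2 (2*t+2)\<bar>) +
        ((\<Sum>t\<in>{1..w-2}. \<bar>G 1 (t+1)\<bar>) + (\<Sum>t\<in>{1..w-2}. \<bar>G 0 (t+2)\<bar>)
        + (\<Sum>t\<in>{1..w-2}. \<bar>G 1 (t+0)\<bar>) + (\<Sum>t\<in>{1..w-2}. \<bar>G 0 (t+1)\<bar>))"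
      by (simp add: sum.distrib)
    also have "\<dots> \<le> PO + PE + (D + D + D + D)"
      by (intro add_mono GB PO2 PE2) auto
    finally show ?thesis by simp
  qed

  define I where "I = {-2*w+1..2*w-1}"
  define EE where "EE = (\<lambda>t. 2*t) ` {1..w-1}"
  define OD where "OD = (\<lambda>t. 2*t+1) ` {1..w-1}"
  define NN where "NN = (\<lambda>t. -(t+1)) ` {1..w-2}"
  define FF where "FF = (\<lambda>t. -w-t-1) ` {1..w-2}"
  define XX where "XX = {-1,0,1,-w,-w-1} \<inter> I"
  have cover: "I \<subseteq> EE \<union> OD \<union> NN \<union> FF \<union> XX"
  proof
    fix c assume c: "c \<in> I"
    consider "c \<ge> 2" "c mod 2 = 0" | "c \<ge> 2" "c mod 2 = 1" | "-w+1 \<le> c" "c \<le> -2"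
      | "c \<le> -w-2" | "c \<in> {-1,0,1,-w,-w-1}" by force
    then show "c \<in> EE \<union> OD \<union> NN \<union> FF \<union> XX"
    proof cases
      case 1
      then have "c = 2*(c div 2)" "c div 2 \<in> {1..w-1}" using c unfolding I_def by auto
      then show ?thesis unfolding EE_def by blast
    next
      case 2
      then have "c = 2*(c div 2)+1" "c div 2 \<in> {1..w-1}" using c unfolding I_def by (auto, presburger+)
      then show ?thesis unfolding OD_def by blast
    next
      case 3
      then have "c = -((-c-1)+1)" "-c-1 \<in> {1..w-2}" using c unfolding I_def by auto
      then show ?thesis unfolding NN_def by blast
    next
      case 4
      then have "c = -w-(-w-1-c)-1" "-w-1-c \<in> {1..w-2}" using c unfolding I_def by auto
      then show ?thesis unfolding FF_def by blast
    next
      case 5 then show ?thesis using c unfolding XX_def by blast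
    qed
  qed
  let ?f = "\<lambda>c. \<bar>d2 c\<bar>"
  have fin: "finite EE" "finite OD" "finite NN" "finite FF" "finite XX"
    unfolding EE_def OD_def NN_def FF_def XX_def by auto
  have "sum ?f I \<le> sum ?f (EE \<union> OD \<union> NN \<union> FF \<union> XX)"
    by (rule sum_mono2) (use cover fin in auto)
  also have "\<dots> \<le> sum ?f EE + sum ?f OD + sum ?f NN + sum ?f FF + sum ?f XX"
  proof -
    have a: "sum ?f (EE \<union> OD \<union> NN \<union> FF \<union> XX) \<le> sum ?f (EE \<union> OD \<union> NN \<union> FF) + sum ?f XX"
      by (rule sum_Un_le_nonneg) (use fin in auto)
    have b: "sum ?f (EE \<union> OD \<union> NN \<union> FF) \<le> sum ?f (EE \<union> OD \<union> NN) + sum ?f FF"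
      by (rule sum_Un_le_nonneg) (use fin in auto)
    have c: "sum ?f (EE \<union> OD \<union> NN) \<le> sum ?f (EE \<union> OD) + sum ?f NN"
      by (rule sum_Un_le_nonneg) (use fin in auto)
    have d: "sum ?f (EE \<union> OD) \<le> sum ?f EE + sum ?f OD"
      by (rule sum_Un_le_nonneg) (use fin in auto)
    from a b c d show ?thesis by linarith
  qed
  also have "sum ?f EE = PE" unfolding EE_def PE_def
    by (subst sum.reindex) (auto simp: inj_on_def)
  also have "sum ?f OD = PO" unfolding OD_def PO_def
    by (subst sum.reindex) (auto simp: inj_on_def)
  also have "sum ?f NN = PN" unfolding NN_def PN_def
    by (subst sum.reindex) (auto simp: inj_on_def)
  also have "sum ?f FF = PF" unfolding FF_def PF_def
    by (subst sum.reindex) (auto simp: inj_on_def)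
  also have "sum ?f XX \<le> 10 * B"
  proof -
    have B0: "0 \<le> B" using bnd[of 0] w0 by auto
    have "sum ?f XX \<le> of_nat (card XX) * (2*B)"
    proof (rule sum_bounded_above)
      fix c assume "c \<in> XX"
      then have "\<bar>c\<bar> \<le> 2*w" "\<bar>c+1\<bar> \<le> 2*w" "\<bar>c-1\<bar> \<le> 2*w" unfolding XX_def I_def by auto
      then have "0 \<le> m c \<and> m c \<le> B" "0 \<le> m (c+1) \<and> m (c+1) \<le> B" "0 \<le> m (c-1) \<and> m (c-1) \<le> B"
        using bnd by blast+
      then show "?f c \<le> 2*B" unfolding d2_def by arith
    qed
    also have "card XX \<le> 5"
    proof -
      have "card XX \<le> card {-1,0,1,-w,-w-1}" unfolding XX_def by (rule card_mono) auto
      also have "{-1,0,1,-w,-w-1} = set [-1,0,1,-w,-w-1]" by simp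
      also have "card \<dots> \<le> 5" using card_length[of "[-1,0,1,-w,-w-1]"] by simp
      finally show ?thesis .
    qed
    then have "of_nat (card XX) * (2*B) \<le> 5 * (2*B)" using B0
      by (intro mult_right_mono) auto
    finally show ?thesis by simp
  qed
  finally have "sum ?f I \<le> PE + PO + PN + PF + 10 * B" by simp
  then show ?thesis using PE PO PN PF unfolding I_def d2_def by linarith
qed

lemma Rset_fin: "finite (Rset n)"
proof -
  have "Rset n \<subseteq> {-int n..int n} \<times> {-int n..int n}"
  proof
    fix p assume "p \<in> Rset n"
    then obtain x y where p: "p = (x,y)" and h: "(7/10) * real n \<le> real_of_int (x + y)"
      "real_of_int (x + y) \<le> real n" "\<bar>real_of_int (x - y)\<bar> \<le> (8/10) * real n"
      unfolding Rset_def by auto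
    have "0 \<le> x + y" "x + y \<le> int n" "\<bar>x - y\<bar> \<le> int n" using h by linarith+
    then show "p \<in> {-int n..int n} \<times> {-int n..int n}" using p by auto
  qed
  then show ?thesis by (rule finite_subset) auto
qed

lemma hR_bnd: assumes "p \<in> Rset n" shows "0 \<le> hR n p \<and> hR n p \<le> int n"
proof -
  obtain x y where p: "p = (x,y)" and h: "(7/10) * real n \<le> real_of_int (x + y)"
      "real_of_int (x + y) \<le> real n"
    using assms unfolding Rset_def by auto
  have "c7 n \<le> x + y" unfolding c7_def using h(1) by (simp add: ceiling_le_iff)
  moreover have "0 \<le> c7 n" unfolding c7_def by simp
  moreover have "x + y \<le> int n" using h(2) by linarith
  moreover have "hR n p = (x + y - c7 n) div 2"
    unfolding hR_def p using floor_divide_of_int_eq[of "x + y - c7 n" 2] by simp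
  ultimately show ?thesis by auto
qed

lemma m_bnd:
  assumes "S \<subseteq> Rset n \<union> Lset n" "meets_all_fibers n S" "\<bar>i\<bar> \<le> 2 * wd n"
  shows "0 \<le> prof_m n S i \<and> prof_m n S i \<le> int n"
proof -
  have ne: "S \<inter> Rfib n i \<noteq> {}" using assms unfolding meets_all_fibers_def by blast
  have fin: "finite (S \<inter> Rfib n i)"
    by (rule finite_subset[OF _ Rset_fin[of n]]) (auto simp: Rfib_def)
  have "prof_m n S i \<in> hR n ` (S \<inter> Rfib n i)"
    unfolding prof_m_def using ne fin by (intro Min_in) auto
  then obtain p where "p \<in> Rfib n i" "prof_m n S i = hR n p" by auto
  then show ?thesis using hR_bnd[of p n] unfolding Rfib_def by auto
qed

lemma Tset_eq: "Tset n = (\<lambda>t. (-t, 2*t, t)) ` {1..wd n} \<union>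
    (\<lambda>t. (- wd n - t, 2*t - 1, - wd n - 1 + t)) ` {1..wd n}"
  unfolding Tset_def by auto

lemma Dsum_ge_disc: "s \<in> {-1,0,1} \<Longrightarrow> Dsum n S s \<le> discrepancy n S"
  unfolding discrepancy_def by auto

lemma T1_le: "(\<Sum>t\<in>{1..wd n}. \<bar>dval n S s (-t, 2*t, t)\<bar>) \<le> Dsum n S s"
proof -
  have "(\<Sum>t\<in>{1..wd n}. \<bar>dval n S s (-t, 2*t, t)\<bar>) = (\<Sum>x\<in>(\<lambda>t. (-t, 2*t, t)) ` {1..wd n}. \<bar>dval n S s x\<bar>)"
    by (subst sum.reindex) (auto simp: inj_on_def)
  also have "\<dots> \<le> Dsum n S s" unfolding Dsum_def
    by (rule sum_mono2) (auto simp: Tset_eq)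
  finally show ?thesis .
qed

lemma T2_le: "(\<Sum>t\<in>{1..wd n}. \<bar>dval n S s (- wd n - t, 2*t - 1, - wd n - 1 + t)\<bar>) \<le> Dsum n S s"
proof -
  have "(\<Sum>t\<in>{1..wd n}. \<bar>dval n S s (- wd n - t, 2*t - 1, - wd n - 1 + t)\<bar>) =
     (\<Sum>x\<in>(\<lambda>t. (- wd n - t, 2*t - 1, - wd n - 1 + t)) ` {1..wd n}. \<bar>dval n S s x\<bar>)"
    by (subst sum.reindex) (auto simp: inj_on_def)
  also have "\<dots> \<le> Dsum n S s" unfolding Dsum_def
    by (rule sum_mono2) (auto simp: Tset_eq)
  finally show ?thesis .
qed

theorem mainTheorem18:
  shows "\<exists>C::real. \<forall>n::nat. \<forall>S. n > 0 \<longrightarrow> S \<subseteq> Rset n \<union> Lset n \<longrightarrow> sum_free S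
           \<longrightarrow> meets_all_fibers n S \<longrightarrow>
           real_of_int (\<Sum>i = - 2 * wd n .. 2 * wd n - 2.
              \<bar>prof_m n S (i + 2) - 2 * prof_m n S (i + 1) + prof_m n S i\<bar>)
           \<le> C * (real_of_int (discrepancy n S) + real n)"
proof (intro exI[of _ 32] allI impI)
  fix n :: nat and S
  assume Ssub: "S \<subseteq> Rset n \<union> Lset n" and mf: "meets_all_fibers n S"
  define w where "w = wd n"
  define m where "m = prof_m n S"
  define M where "M = prof_M n S"
  define D where "D = discrepancy n S"
  have w0: "0 \<le> w" unfolding w_def wd_def by simp
  have bnd: "0 \<le> m i \<and> m i \<le> int n" if "\<bar>i\<bar> \<le> 2*w" for i
    using m_bnd[OF Ssub mf] that unfolding m_def w_def by blast
  have hF: "(\<Sum>u\<in>A. \<bar>M (u+s) - m (2*u+s) - m (-u)\<bar>) \<le> D"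
    if A: "A \<subseteq> {1..w}" and v: "\<And>u. u \<in> A \<Longrightarrow> \<bar>2*u+s\<bar> \<le> 2*w \<and> \<bar>u+s\<bar> \<le> w"
      and s: "s \<in> {-1,0,1}" for s A
  proof -
    have "(\<Sum>u\<in>A. \<bar>M (u+s) - m (2*u+s) - m (-u)\<bar>) = (\<Sum>u\<in>A. \<bar>dval n S s (-u, 2*u, u)\<bar>)"
    proof (rule sum.cong)
      fix u assume "u \<in> A"
      then have "1 \<le> u" "u \<le> w" "\<bar>2*u+s\<bar> \<le> 2*w" "\<bar>u+s\<bar> \<le> w" using A v by auto
      then show "\<bar>M (u+s) - m (2*u+s) - m (-u)\<bar> = \<bar>dval n S s (-u, 2*u, u)\<bar>"
        unfolding dval_def M_def m_def w_def by (simp add: algebra_simps)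
    qed simp
    also have "\<dots> \<le> (\<Sum>u\<in>{1..w}. \<bar>dval n S s (-u, 2*u, u)\<bar>)"
      by (rule sum_mono2) (use A in auto)
    also have "\<dots> \<le> D" unfolding w_def D_def using T1_le[of n S s] Dsum_ge_disc[OF s, of n S] by linarith
    finally show ?thesis .
  qed
  have hG: "(\<Sum>u\<in>A. \<bar>M (-w-1+u+s) - m (2*u-1+s) - m (-w-u)\<bar>) \<le> D"
    if A: "A \<subseteq> {1..w}" and v: "\<And>u. u \<in> A \<Longrightarrow> \<bar>2*u-1+s\<bar> \<le> 2*w \<and> \<bar>-w-1+u+s\<bar> \<le> w"
      and s: "s \<in> {-1,0,1}" for s A
  proof -
    have "(\<Sum>u\<in>A. \<bar>M (-w-1+u+s) - m (2*u-1+s) - m (-w-u)\<bar>) = (\<Sum>u\<in>A. \<bar>dval n S s (- w - u, 2*u - 1, - w - 1 + u)\<bar>)"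
    proof (rule sum.cong)
      fix u assume "u \<in> A"
      then have "1 \<le> u" "u \<le> w" "\<bar>2*u-1+s\<bar> \<le> 2*w" "\<bar>-w-1+u+s\<bar> \<le> w" using A v by auto
      then show "\<bar>M (-w-1+u+s) - m (2*u-1+s) - m (-w-u)\<bar> = \<bar>dval n S s (- w - u, 2*u - 1, - w - 1 + u)\<bar>"
        unfolding dval_def M_def m_def w_def by (auto simp: algebra_simps)
    qed simp
    also have "\<dots> \<le> (\<Sum>u\<in>{1..w}. \<bar>dval n S s (- w - u, 2*u - 1, - w - 1 + u)\<bar>)"
      by (rule sum_mono2) (use A in auto)
    also have "\<dots> \<le> D" unfolding w_def D_def using T2_le[of n S s] Dsum_ge_disc[OF s, of n S] by linarith
    finally show ?thesis .
  qed
  have core': "(\<Sum>c\<in>{-2*w+1..2*w-1}. \<bar>m (c+1) - 2 * m c + m (c-1)\<bar>) \<le> 32 * D + 10 * int n"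
    by (rule core[OF w0 bnd hF hG])
  have "0 \<le> Dsum n S 0" unfolding Dsum_def by (rule sum_nonneg) simp
  then have D0: "0 \<le> D" unfolding D_def using Dsum_ge_disc[of 0 n S] by simp
  have "(\<Sum>i = - 2 * wd n .. 2 * wd n - 2.
              \<bar>prof_m n S (i + 2) - 2 * prof_m n S (i + 1) + prof_m n S i\<bar>) =
        (\<Sum>i\<in>{-2*w..2*w-2}. (\<lambda>c. \<bar>m (c+1) - 2 * m c + m (c-1)\<bar>) (i+1))"
    unfolding m_def w_def by (simp add: add.assoc)
  also have "\<dots> = (\<Sum>c\<in>{-2*w+1..2*w-2+1}. \<bar>m (c+1) - 2 * m c + m (c-1)\<bar>)"
    by (rule sum_shift_int)
  also have "\<dots> \<le> 32 * D + 10 * int n" using core' by (simp add: algebra_simps)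
  finally have "(\<Sum>i = - 2 * wd n .. 2 * wd n - 2.
              \<bar>prof_m n S (i + 2) - 2 * prof_m n S (i + 1) + prof_m n S i\<bar>) \<le> 32 * D + 10 * int n" .
  then have "real_of_int (\<Sum>i = - 2 * wd n .. 2 * wd n - 2.
              \<bar>prof_m n S (i + 2) - 2 * prof_m n S (i + 1) + prof_m n S i\<bar>) \<le> 32 * real_of_int D + 10 * real n"
    unfolding of_int_le_iff[symmetric, where 'a=real] by simp
  then show "real_of_int (\<Sum>i = - 2 * wd n .. 2 * wd n - 2.
              \<bar>prof_m n S (i + 2) - 2 * prof_m n S (i + 1) + prof_m n S i\<bar>)
           \<le> 32 * (real_of_int (discrepancy n S) + real n)"
    using D0 unfolding D_def by simp
qed

end
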